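(* Let $d$ be a positive square-free integer with $d\equiv 7\pmod 8$, $K=\mathbb{Q}[\sqrt{-d}]$ with ring of integers $\mathfrak{o}_K$, and $\mathcal{Q}=\mathbb{Q}[\sqrt{d}]$ with ring of integers $\mathfrak{o}_{\mathcal{Q}}=\mathbb{Z}[\sqrt{d}]$. (1) Let $\xi\neq\psi$ be elements of $\{1,i,j,k\}$, $p,m\in\mathbb{Z}$, and let $u=m\sqrt{-d}\,\xi+p\psi\in\mathbb{H}(\mathfrak{o}_K)$ have norm $N(u)=1$. If $1\notin\operatorname{supp}(u)$, then $u$ is a torsion unit. (2) For a unit $\epsilon=p+m\sqrt{d}$ ($p,m\in\mathbb{Z}$) of $\mathfrak{o}_{\mathcal{Q}}$ and $\psi\in\{i,j,k\}$, put $u_{(\epsilon,\psi)}=p+m\sqrt{-d}\,\psi\in\mathbb{H}(\mathfrak{o}_K)$. Then $u_{(\epsilon,\psi)}^n=u_{(\epsilon^n,\psi)}$ for all $\psi\in\{i,j,k\}$ and all $n\in\mathbb{Z}$.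
   Context: $\mathbb{H}(K)=\left(\frac{-1,-1}{K}\right)$ is the quaternion algebra over $K$ with $K$-basis $1,i,j,k$, $i^2=j^2=-1$, $k=ji=-ij$; $\mathbb{H}(\mathfrak{o}_K)$ is the set of $\mathfrak{o}_K$-linear combinations of $1,i,j,k$; the norm is $N(x_1+x_ii+x_jj+x_kk)=x_1^2+x_i^2+x_j^2+x_k^2$. The support $\operatorname{supp}(u)$ of $u$ is the set of basis elements among $1,i,j,k$ whose coefficient in $u$ is nonzero. *)

theory Defs
  imports Complex_Main "HOL-Computational_Algebra.Squarefree"
begin

text \<open>Quaternions (-1,-1 / F) with coefficients in a commutative ring, basis 1,i,j,k,
  i^2 = j^2 = -1, k = j i = - i j.  Components: q1 (coefficient of 1), qi, qj, qk.\<close>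

datatype 'a quat = Quat (q1: 'a) (qi: 'a) (qj: 'a) (qk: 'a)

instantiation quat :: (comm_ring_1) "{one, times}"
begin
definition one_quat :: "'a quat" where "one_quat = Quat 1 0 0 0"
definition times_quat :: "'a quat \<Rightarrow> 'a quat \<Rightarrow> 'a quat" where
  "times_quat x y = Quat
     (q1 x * q1 y - qi x * qi y - qj x * qj y - qk x * qk y)
     (q1 x * qi y + qi x * q1 y - qj x * qk y + qk x * qj y)
     (q1 x * qj y + qj x * q1 y + qi x * qk y - qk x * qi y)
     (q1 x * qk y + qk x * q1 y + qj x * qi y - qi x * qj y)"
instance ..
end

instance quat :: (comm_ring_1) power ..

definition qI :: "'a::comm_ring_1 quat" where "qI = Quat 0 1 0 0"
definition qJ :: "'a::comm_ring_1 quat" where "qJ = Quat 0 0 1 0"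
definition qK :: "'a::comm_ring_1 quat" where "qK = Quat 0 0 0 1"

definition qbasis :: "'a::comm_ring_1 quat set" where "qbasis = {1, qI, qJ, qK}"

definition qscale :: "'a::comm_ring_1 \<Rightarrow> 'a quat \<Rightarrow> 'a quat" where
  "qscale c x = Quat (c * q1 x) (c * qi x) (c * qj x) (c * qk x)"

definition qadd :: "'a::comm_ring_1 quat \<Rightarrow> 'a quat \<Rightarrow> 'a quat" where
  "qadd x y = Quat (q1 x + q1 y) (qi x + qi y) (qj x + qj y) (qk x + qk y)"

definition qnorm :: "'a::comm_ring_1 quat \<Rightarrow> 'a" where
  "qnorm x = (q1 x)^2 + (qi x)^2 + (qj x)^2 + (qk x)^2"

definition qconj :: "'a::comm_ring_1 quat \<Rightarrow> 'a quat" where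
  "qconj x = Quat (q1 x) (- qi x) (- qj x) (- qk x)"

definition qinv :: "'a::field quat \<Rightarrow> 'a quat" where
  "qinv x = qscale (inverse (qnorm x)) (qconj x)"

definition qpowi :: "'a::field quat \<Rightarrow> int \<Rightarrow> 'a quat" where
  "qpowi x n = (if 0 \<le> n then x ^ nat n else (qinv x) ^ nat (- n))"

text \<open>K = Q(sqrt(-d)) is realised inside the complex numbers, sqrt(-d) = i * sqrt d.\<close>
definition sqrt_neg :: "int \<Rightarrow> complex" where
  "sqrt_neg d = \<i> * complex_of_real (sqrt (real_of_int d))"

text \<open>Ring of integers of Q(sqrt(-d)) for d = 3 mod 4: Z[(1 + sqrt(-d))/2].\<close>
definition oK :: "int \<Rightarrow> complex set" where
  "oK d = {of_int a + of_int b * (1 + sqrt_neg d) / 2 | a b. True}"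

definition HoK :: "int \<Rightarrow> complex quat set" where
  "HoK d = {x. q1 x \<in> oK d \<and> qi x \<in> oK d \<and> qj x \<in> oK d \<and> qk x \<in> oK d}"

definition torsion_unit :: "int \<Rightarrow> complex quat \<Rightarrow> bool" where
  "torsion_unit d u \<longleftrightarrow> u \<in> HoK d \<and> (\<exists>v\<in>HoK d. u * v = 1 \<and> v * u = 1)
     \<and> (\<exists>n::nat. n > 0 \<and> u ^ n = 1)"

text \<open>Ring of integers of Q(sqrt d), d = 3 mod 4: Z[sqrt d], inside the reals.\<close>
definition oQ :: "int \<Rightarrow> real set" where
  "oQ d = {of_int a + of_int b * sqrt (real_of_int d) | a b. True}"

definition oQ_unit :: "int \<Rightarrow> real \<Rightarrow> bool" where
  "oQ_unit d e \<longleftrightarrow> e \<in> oQ d \<and> (\<exists>f\<in>oQ d. e * f = 1)"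

text \<open>u_(eps,psi) = p + m sqrt(-d) psi for eps = p + m sqrt d\<close>
definition u_eps :: "int \<Rightarrow> int \<Rightarrow> int \<Rightarrow> complex quat \<Rightarrow> complex quat" where
  "u_eps d p m \<psi> = qadd (qscale (of_int p) 1) (qscale (of_int m * sqrt_neg d) \<psi>)"

end

theory Submission
  imports Defs
begin

lemma sq_mod4: "(z::int)^2 mod 4 = 0 \<or> z^2 mod 4 = 1"
proof -
  obtain k where "z = 2*k \<or> z = 2*k+1" by (metis evenE oddE)
  then show ?thesis
  proof
    assume "z = 2*k" then have "z^2 = 4*k^2" by (simp add: power2_eq_square)
    then show ?thesis by simp
  next
    assume "z = 2*k+1" then have "z^2 = 4*(k^2+k)+1" by (simp add: power2_eq_square algebra_simps)
    moreover have "(4*t+1) mod 4 = (1::int)" for t by presburger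
    ultimately show ?thesis by metis
  qed
qed

lemma descent: "d mod 4 = (3::int) \<Longrightarrow> d * x^2 = z^2 \<Longrightarrow> x = 0"
proof (induction "nat \<bar>x\<bar>" arbitrary: x z rule: less_induct)
  case less
  show ?case
  proof (rule ccontr)
    assume nz: "x \<noteq> 0"
    show False
    proof (cases "even x")
      case False
      then obtain k where "x = 2*k+1" by (metis oddE)
      then have "x^2 = 4*(k^2+k)+1" by (simp add: power2_eq_square algebra_simps)
      then have "(d * x^2) mod 4 = 3" using less.prems(1)
        by (metis mod_mult_right_eq mult.right_neutral mod_add_left_eq mod_mult_self2 add.commute)
      then show False using sq_mod4[of z] less.prems(2) by simp
    next
      case True
      then obtain k where k: "x = 2*k" by blast
      then have "z^2 = 4*(d*k^2)" using less.prems(2) by (simp add: power2_eq_square algebra_simps)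
      then have "even (z^2)" by simp
      then have "even z" by simp
      then obtain w where w: "z = 2*w" by blast
      have "d*k^2 = w^2" using \<open>z^2 = 4*(d*k^2)\<close> w by (simp add: power2_eq_square)
      moreover have "nat \<bar>k\<bar> < nat \<bar>x\<bar>" using k nz by auto
      ultimately have "k = 0" using less.hyps less.prems(1) by blast
      then show False using k nz by simp
    qed
  qed
qed

lemma sqrt_neg_sq: "d \<ge> 0 \<Longrightarrow> sqrt_neg d * sqrt_neg d = - of_int d"
proof -
  assume "d \<ge> 0"
  have "complex_of_real (sqrt (real_of_int d)) * complex_of_real (sqrt (real_of_int d)) = of_int d"
  proof -
    have r: "sqrt (real_of_int d) * sqrt (real_of_int d) = real_of_int d" using \<open>d \<ge> 0\<close> by simp
    have "complex_of_real (sqrt (real_of_int d) * sqrt (real_of_int d)) = complex_of_real (real_of_int d)"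
      by (simp only: r)
    then show ?thesis by (simp only: of_real_mult of_real_of_int_eq)
  qed
  moreover have "\<i> * r * (\<i> * r) = (\<i> * \<i>) * (r * r)" for r :: complex
    by (simp only: ac_simps)
  ultimately show ?thesis unfolding sqrt_neg_def by simp
qed

lemma quat_ext': "q1 x = q1 y \<Longrightarrow> qi x = qi y \<Longrightarrow> qj x = qj y \<Longrightarrow> qk x = qk y \<Longrightarrow> x = y"
  by (cases x; cases y) auto

lemma U_mult:
  assumes "d \<ge> 0" "\<psi> \<in> {qI, qJ, qK}"
  shows "u_eps d a b \<psi> * u_eps d c e \<psi> = u_eps d (a*c + d*b*e) (a*e + b*c) \<psi>"
proof -
  have s: "sqrt_neg d * sqrt_neg d = - of_int d" using sqrt_neg_sq assms(1) .
  have s2: "sqrt_neg d * (sqrt_neg d * x) = - of_int d * x" for x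
    by (metis s mult.assoc)
  from assms(2) show ?thesis
    by (auto simp: u_eps_def qadd_def qscale_def times_quat_def one_quat_def qI_def qJ_def qK_def
        algebra_simps s s2)
qed

lemma U_one: "\<psi> \<in> {qI, qJ, qK} \<Longrightarrow> (1::complex quat) = u_eps d 1 0 \<psi>"
  by (auto simp: u_eps_def qadd_def qscale_def one_quat_def qI_def qJ_def qK_def)

lemma R_mult:
  assumes "d \<ge> 0"
  shows "(of_int a + of_int b * sqrt (real_of_int d)) * (of_int c + of_int e * sqrt (real_of_int d))
     = of_int (a*c + d*b*e) + of_int (a*e + b*c) * sqrt (real_of_int d)"
proof -
  have "sqrt (real_of_int d) * sqrt (real_of_int d) = of_int d" using assms by simp
  then show ?thesis by (simp add: algebra_simps)
qed

lemma U_pow: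
  assumes "d \<ge> 0" "\<psi> \<in> {qI, qJ, qK}"
  shows "\<exists>x y::int. (of_int a + of_int b * sqrt (real_of_int d)) ^ n = of_int x + of_int y * sqrt (real_of_int d)
     \<and> u_eps d a b \<psi> ^ n = u_eps d x y \<psi>"
proof (induction n)
  case 0
  have "(of_int a + of_int b * sqrt (real_of_int d)) ^ 0 = of_int 1 + of_int 0 * sqrt (real_of_int d)"
    by simp
  moreover have "u_eps d a b \<psi> ^ 0 = u_eps d 1 0 \<psi>" using U_one[OF assms(2)] by simp
  ultimately show ?case by blast
next
  case (Suc n)
  then obtain x y where xy: "(of_int a + of_int b * sqrt (real_of_int d)) ^ n = of_int x + of_int y * sqrt (real_of_int d)"
     "u_eps d a b \<psi> ^ n = u_eps d x y \<psi>" by blast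
  have "(of_int a + of_int b * sqrt (real_of_int d)) ^ Suc n = of_int (a*x + d*b*y) + of_int (a*y + b*x) * sqrt (real_of_int d)"
    by (simp add: xy R_mult[OF assms(1)])
  moreover have "u_eps d a b \<psi> ^ Suc n = u_eps d (a*x + d*b*y) (a*y + b*x) \<psi>"
    by (simp add: xy U_mult[OF assms])
  ultimately show ?case by blast
qed

lemma part1_pow4:
  assumes "q1 u = 0" "qnorm u = 1"
  shows "u * u = Quat (-1) 0 0 0"
proof -
  have "(qi u)^2 + (qj u)^2 + (qk u)^2 = 1" using assms unfolding qnorm_def by simp
  then show ?thesis using assms(1) unfolding times_quat_def
    by (simp add: power2_eq_square algebra_simps)
qed

lemma quat_conj_mult:
  assumes "q1 u = 0" "qnorm u = 1"
  shows "u * qconj u = 1" "qconj u * u = 1"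
proof -
  have "(qi u)^2 + (qj u)^2 + (qk u)^2 = 1" using assms unfolding qnorm_def by simp
  then show "u * qconj u = 1" "qconj u * u = 1" using assms(1)
    unfolding times_quat_def qconj_def one_quat_def
    by (simp_all add: power2_eq_square algebra_simps)
qed

lemma quat_pow4:
  assumes "q1 u = 0" "qnorm u = 1"
  shows "u ^ 4 = 1"
proof -
  have u1: "u * 1 = u" unfolding times_quat_def one_quat_def by simp
  have uM: "u * Quat (-1) 0 0 0 = qconj u" using assms(1)
    unfolding times_quat_def qconj_def by simp
  have "u ^ 4 = u * (u * (u * (u * 1)))" by (simp add: eval_nat_numeral)
  also have "\<dots> = 1" using u1 part1_pow4[OF assms] uM quat_conj_mult[OF assms] by simp
  finally show ?thesis .
qed

lemma oK_uminus: "x \<in> oK d \<Longrightarrow> - x \<in> oK d"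
proof -
  assume "x \<in> oK d"
  then obtain a b where "x = of_int a + of_int b * (1 + sqrt_neg d) / 2" unfolding oK_def by blast
  then have "- x = of_int (-a) + of_int (-b) * (1 + sqrt_neg d) / 2" by simp
  then show ?thesis unfolding oK_def by blast
qed

lemma memK: "of_int m * sqrt_neg d * of_int e1 + of_int p * of_int e2 \<in> oK d"
proof -
  have "of_int m * sqrt_neg d * of_int e1 + of_int p * of_int e2
     = of_int (p*e2 - m*e1) + of_int (2*m*e1) * (1 + sqrt_neg d) / (2::complex)"
    by (simp add: field_simps)
  then show ?thesis unfolding oK_def by blast
qed

lemma basis_int: "\<xi> \<in> qbasis \<Longrightarrow> \<exists>a b c e::int. (\<xi>::complex quat) = Quat (of_int a) (of_int b) (of_int c) (of_int e)"
  unfolding qbasis_def one_quat_def qI_def qJ_def qK_def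
  by auto

lemma part1:
  assumes "\<xi> \<in> qbasis" "\<psi> \<in> qbasis"
    and n: "qnorm (qadd (qscale (of_int m * sqrt_neg d) \<xi>) (qscale (of_int p) \<psi>)) = 1"
    and z: "q1 (qadd (qscale (of_int m * sqrt_neg d) \<xi>) (qscale (of_int p) \<psi>)) = 0"
  shows "torsion_unit d (qadd (qscale (of_int m * sqrt_neg d) \<xi>) (qscale (of_int p) \<psi>))"
proof -
  define u where "u = qadd (qscale (of_int m * sqrt_neg d) \<xi>) (qscale (of_int p) \<psi>)"
  obtain a b c e where x: "\<xi> = Quat (of_int a) (of_int b) (of_int c) (of_int e)"
    using basis_int[OF assms(1)] by blast
  obtain a' b' c' e' where y: "\<psi> = Quat (of_int a') (of_int b') (of_int c') (of_int e')"
    using basis_int[OF assms(2)] by blast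
  have H: "u \<in> HoK d" unfolding u_def HoK_def x y qadd_def qscale_def
    by (simp add: memK)
  have H2: "qconj u \<in> HoK d" using H unfolding HoK_def qconj_def by (simp add: oK_uminus)
  have n': "qnorm u = 1" and z': "q1 u = 0" using n z unfolding u_def by auto
  have "torsion_unit d u" unfolding torsion_unit_def
    using H H2 quat_conj_mult[OF z' n'] quat_pow4[OF z' n']
    by (intro conjI bexI[of _ "qconj u"] exI[of _ 4]) auto
  then show ?thesis unfolding u_def .
qed

lemma unit_norm:
  assumes d: "d > 0" "d mod 8 = 7"
    and u: "oQ_unit d (of_int p + of_int m * sqrt (real_of_int d))"
  shows "p^2 - d*m^2 = 1 \<or> p^2 - d*m^2 = -1"
proof -
  obtain f where "f \<in> oQ d" and f1: "(of_int p + of_int m * sqrt (real_of_int d)) * f = 1"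
    using u unfolding oQ_unit_def by blast
  then obtain a b where fd: "f = of_int a + of_int b * sqrt (real_of_int d)" unfolding oQ_def by blast
  define x where "x = p*b + m*a"
  define y where "y = p*a + d*m*b"
  have e: "of_int y + of_int x * sqrt (real_of_int d) = (1::real)"
    using f1 unfolding fd R_mult[of d, OF order.strict_implies_order[OF d(1)]] x_def y_def
    by (simp add: algebra_simps)
  then have "of_int x * sqrt (real_of_int d) = 1 - of_int y" by (simp add: algebra_simps)
  then have "(of_int x * sqrt (real_of_int d))^2 = (1 - of_int y)^2" by simp
  then have "real_of_int (d * x^2) = real_of_int ((1-y)^2)" using d(1)
    by (simp add: power_mult_distrib mult.commute)
  then have "d * x^2 = (1-y)^2" by linarith
  moreover have "d mod 4 = 3" using d(2) by presburger
  ultimately have x0: "x = 0" using descent by blast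
  then have y1: "y = 1" using e by simp
  have "(p^2 - d*m^2) * (a^2 - d*b^2) = y^2 - d*x^2" unfolding x_def y_def
    by (simp add: power2_eq_square algebra_simps)
  then have "(p^2 - d*m^2) * (a^2 - d*b^2) = 1" using x0 y1 by simp
  then show ?thesis by (auto simp: zmult_eq_1_iff)
qed

lemma U_qinv:
  assumes "d \<ge> 0" "\<psi> \<in> {qI, qJ, qK}" "p^2 - d*m^2 = N" "N = 1 \<or> N = -1"
  shows "qinv (u_eps d p m \<psi>) = u_eps d (N*p) (-N*m) \<psi>"
proof -
  have s: "sqrt_neg d * sqrt_neg d = - of_int d" using sqrt_neg_sq assms(1) .
  have Nc: "(of_int N :: complex) = of_int p * of_int p - of_int d * (of_int m * of_int m)"
    using assms(3) by (simp add: power2_eq_square flip: assms(3))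
  have sq: "(x * sqrt_neg d)^2 = x^2 * (sqrt_neg d * sqrt_neg d)" for x
    by (simp add: power2_eq_square algebra_simps)
  have e: "(of_int p)^2 + (of_int m * sqrt_neg d)^2 = (of_int N :: complex)"
    unfolding sq s Nc by (simp add: power2_eq_square algebra_simps)
  have qn: "qnorm (u_eps d p m \<psi>) = of_int N" using assms(2) e
    by (auto simp: qnorm_def u_eps_def qadd_def qscale_def one_quat_def qI_def qJ_def qK_def)
  have inv: "inverse (of_int N :: complex) = of_int N" using assms(4) by auto
  show ?thesis unfolding qinv_def qn inv using assms(2)
    by (auto simp: qconj_def qscale_def u_eps_def qadd_def one_quat_def qI_def qJ_def qK_def)
qed

lemma part2:
  assumes d: "d > 0" "d mod 8 = 7"
    and u: "oQ_unit d (of_int p + of_int m * sqrt (real_of_int d))" and psi: "\<psi> \<in> {qI, qJ, qK}"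
  shows "\<exists>p' m' :: int.
                   (of_int p + of_int m * sqrt (real_of_int d)) powi n
                     = of_int p' + of_int m' * sqrt (real_of_int d)
                 \<and> qpowi (u_eps d p m \<psi>) n = u_eps d p' m' \<psi>"
proof -
  have d0: "d \<ge> 0" using d by simp
  define N where "N = p^2 - d*m^2"
  have N: "N = 1 \<or> N = -1" using unit_norm[OF d u] N_def by simp
  show ?thesis
  proof (cases "n \<ge> 0")
    case True
    then show ?thesis using U_pow[OF d0 psi, of p m "nat n"]
      by (simp add: power_int_def qpowi_def)
  next
    case False
    have iv: "inverse (of_int p + of_int m * sqrt (real_of_int d))
        = of_int (N*p) + of_int (-N*m) * sqrt (real_of_int d)"
    proof (rule inverse_unique)
      have "(p * (N * p) + d * m * (- N * m)) = N*N" unfolding N_def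
        by (simp add: power2_eq_square algebra_simps)
      also have "\<dots> = 1" using N by auto
      finally show "(of_int p + of_int m * sqrt (real_of_int d)) *
          (of_int (N*p) + of_int (-N*m) * sqrt (real_of_int d)) = 1"
        unfolding R_mult[OF d0] by (simp add: algebra_simps)
    qed
    from False show ?thesis using U_pow[OF d0 psi, of "N*p" "-N*m" "nat (-n)"]
      U_qinv[OF d0 psi N_def[symmetric] N]
      by (simp add: power_int_def qpowi_def iv)
  qed
qed

theorem mainTheorem15:
  fixes d :: int
  assumes "d > 0" and "squarefree d" and "d mod 8 = 7"
  shows "(\<forall>\<xi> \<psi> (p::int) (m::int).
            \<xi> \<in> qbasis \<and> \<psi> \<in> qbasis \<and> \<xi> \<noteq> \<psi> \<and>
            qnorm (qadd (qscale (of_int m * sqrt_neg d) \<xi>) (qscale (of_int p) \<psi>)) = 1 \<and>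
            q1 (qadd (qscale (of_int m * sqrt_neg d) \<xi>) (qscale (of_int p) \<psi>)) = 0
            \<longrightarrow> torsion_unit d (qadd (qscale (of_int m * sqrt_neg d) \<xi>) (qscale (of_int p) \<psi>)))
       \<and> (\<forall>(p::int) (m::int) \<psi> (n::int).
            oQ_unit d (of_int p + of_int m * sqrt (real_of_int d)) \<and> \<psi> \<in> {qI, qJ, qK}
            \<longrightarrow> (\<exists>p' m' :: int.
                   (of_int p + of_int m * sqrt (real_of_int d)) powi n
                     = of_int p' + of_int m' * sqrt (real_of_int d)
                 \<and> qpowi (u_eps d p m \<psi>) n = u_eps d p' m' \<psi>))"
  using part1 part2[OF assms(1,3)] by blast

end
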